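(* (i) If $Q_1,Q_2\in\mathcal{E}_\omega$ then $Q_1\circ Q_2\in\mathcal{E}_\omega$; moreover $Q_1\circ Q_2\in\mathcal{E}_\infty$ whenever $Q_1\in\mathcal{E}_\infty$ or $Q_2\in\mathcal{E}_\infty$. (ii) If $Q\in\mathcal{E}_\infty$ then $Q\,\mathtt{I}\in\mathcal{E}_\infty$.
   Context: $\mathtt{I}=\lambda x.x$, $Q_1\circ Q_2=\mathtt{B}Q_1Q_2$ where $\mathtt{B}=\lambda fgx.f(gx)$. Böhm trees as usual. The relation $\le^\eta_\omega$ is the greatest relation on Böhm-like trees such that $U\le^\eta_\omega V$ implies either $U=V=\bot$, or $U=\lambda x_1\dots x_n.yU_1\cdots U_k$ and $V=\lambda x_1\dots x_nz_1\dots z_m.yV_1\cdots V_kV'_1\cdots V'_m$ with the $z_i$ not free in $yU_1\cdots U_kV_1\cdots V_k$, $U_j\le^\eta_\omega V_j$ and $z_i\le^\eta_\omega V'_i$. $\mathcal{E}_\omega=\{Q: BT(\mathtt{I})\le^\eta_\omega BT(Q)\}$; $\mathcal{E}_\infty$ is the set of $Q\in\mathcal{E}_\omega$ whose Böhm tree is infinite. *)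

theory Defs
  imports Main
begin

datatype trm = Var nat | App trm trm | Abs trm

fun lift :: "trm \<Rightarrow> nat \<Rightarrow> trm" where
  "lift (Var i) k = (if i < k then Var i else Var (Suc i))"
| "lift (App s t) k = App (lift s k) (lift t k)"
| "lift (Abs s) k = Abs (lift s (Suc k))"

fun subst :: "trm \<Rightarrow> trm \<Rightarrow> nat \<Rightarrow> trm" where
  "subst (Var i) s k = (if k < i then Var (i - 1) else if i = k then s else Var i)"
| "subst (App t u) s k = App (subst t s k) (subst u s k)"
| "subst (Abs t) s k = Abs (subst t (lift s 0) (Suc k))"

fun is_abs :: "trm \<Rightarrow> bool" where
  "is_abs (Abs _) = True"
| "is_abs _ = False"

inductive hred :: "trm \<Rightarrow> trm \<Rightarrow> bool" where
  beta: "hred (App (Abs s) t) (subst s t 0)"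
| appL: "hred s s' \<Longrightarrow> \<not> is_abs s \<Longrightarrow> hred (App s t) (App s' t)"
| abs: "hred s s' \<Longrightarrow> hred (Abs s) (Abs s')"

fun nabs :: "trm \<Rightarrow> nat" where
  "nabs (Abs t) = Suc (nabs t)"
| "nabs _ = 0"

fun body :: "trm \<Rightarrow> trm" where
  "body (Abs t) = body t"
| "body t = t"

fun hd_of :: "trm \<Rightarrow> trm" where
  "hd_of (App s t) = hd_of s"
| "hd_of t = t"

fun args_of :: "trm \<Rightarrow> trm list" where
  "args_of (App s t) = args_of s @ [t]"
| "args_of _ = []"

definition hvar :: "trm \<Rightarrow> nat" where
  "hvar t = (case hd_of t of Var i \<Rightarrow> i | _ \<Rightarrow> 0)"

definition is_hnf :: "trm \<Rightarrow> bool" where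
  "is_hnf M \<longleftrightarrow> (\<exists>i. hd_of (body M) = Var i)"

definition has_hnf :: "trm \<Rightarrow> bool" where
  "has_hnf M \<longleftrightarrow> (\<exists>N. hred\<^sup>*\<^sup>* M N \<and> is_hnf N)"

definition hnf_of :: "trm \<Rightarrow> trm" where
  "hnf_of M = (THE N. hred\<^sup>*\<^sup>* M N \<and> is_hnf N)"

text \<open>\<open>Nd n y Ts\<close> is the node \<lambda>x1..xn. y T1 .. Tk, where the head variable y
  is a de Bruijn index counting all enclosing binders (of this node and above).\<close>
codatatype bt = Bot | Nd nat nat "bt list"

primcorec BT :: "trm \<Rightarrow> bt" where
  "BT M = (if has_hnf M
           then Nd (nabs (hnf_of M)) (hvar (body (hnf_of M))) (map BT (args_of (body (hnf_of M))))
           else Bot)"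

primcorec bt_shift :: "nat \<Rightarrow> nat \<Rightarrow> bt \<Rightarrow> bt" where
  "bt_shift k c T = (case T of Bot \<Rightarrow> Bot
     | Nd n y Ts \<Rightarrow> Nd n (if y < c + n then y else y + k) (map (bt_shift k (c + n)) Ts))"

text \<open>U = \<lambda>x1..xn. y U1..Uk,  V = \<lambda>x1..xn z1..zm. y V1..Vk V'1..V'm.
  In de Bruijn notation the head of V is y+m; "z_i not free in V_j" means
  V_j = bt_shift m 0 W_j for some W_j, and U_j is compared with W_j
  (the tree V_j read in the context of U_j); z_i has index m - i.\<close>
coinductive eta_le :: "bt \<Rightarrow> bt \<Rightarrow> bool" where
  bot: "eta_le Bot Bot"
| nd: "list_all2 eta_le Us Ws
       \<Longrightarrow> list_all2 eta_le (map (\<lambda>j. Nd 0 j []) (rev [0..<m])) Vs'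
       \<Longrightarrow> eta_le (Nd n y Us) (Nd (n + m) (y + m) (map (bt_shift m 0) Ws @ Vs'))"

inductive bt_finite :: "bt \<Rightarrow> bool" where
  "bt_finite Bot"
| "(\<And>T. T \<in> set Ts \<Longrightarrow> bt_finite T) \<Longrightarrow> bt_finite (Nd n y Ts)"

definition lamI :: trm where "lamI = Abs (Var 0)"

definition lamB :: trm where "lamB = Abs (Abs (Abs (App (Var 2) (App (Var 1) (Var 0)))))"

definition bcomp :: "trm \<Rightarrow> trm \<Rightarrow> trm" where "bcomp Q1 Q2 = App (App lamB Q1) Q2"

definition E_omega :: "trm set" where "E_omega = {Q. eta_le (BT lamI) (BT Q)}"

definition E_inf :: "trm set" where "E_inf = {Q \<in> E_omega. \<not> bt_finite (BT Q)}"

end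

theory Submission
  imports Defs
begin


lemma lift_lift:
    "i < k + 1 \<Longrightarrow> lift (lift t i) (Suc k) = lift (lift t k) i"
  by (induct t arbitrary: i k) auto

lemma lift_subst [simp]:
    "j < i + 1 \<Longrightarrow> lift (subst t s j) i = subst (lift t (i + 1)) (lift s i) j"
  by (induct t arbitrary: i j s)
    (simp_all add: diff_Suc lift_lift split: nat.split)

lemma lift_subst_lt:
    "i < j + 1 \<Longrightarrow> lift (subst t s j) i = subst (lift t i) (lift s i) (j + 1)"
  by (induct t arbitrary: i j s) (auto simp: lift_lift)

lemma subst_lift [simp]:
    "subst (lift t k) s k = t"
  by (induct t arbitrary: k s) simp_all

lemma subst_subst:
    "i < j + 1 \<Longrightarrow> subst (subst t (lift v i) (Suc j)) (subst u v j) i = subst (subst t u i) v j"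
  by (induct t arbitrary: i j u v)
    (simp_all add: diff_Suc lift_lift [symmetric] lift_subst_lt
      split: nat.split)


fun absn :: "nat \<Rightarrow> trm \<Rightarrow> trm" where
  "absn 0 t = t" | "absn (Suc n) t = Abs (absn n t)"

fun apps :: "trm \<Rightarrow> trm list \<Rightarrow> trm" where
  "apps t [] = t" | "apps t (x # xs) = apps (App t x) xs"

fun liftn :: "nat \<Rightarrow> trm \<Rightarrow> trm" where
  "liftn 0 t = t" | "liftn (Suc n) t = liftn n (lift t 0)"

lemma apps_snoc[simp]: "apps t (xs @ [x]) = App (apps t xs) x"
  by (induct xs arbitrary: t) auto

lemma lift_absn: "lift (absn n t) k = absn n (lift t (k + n))"
  by (induct n arbitrary: k) auto

lemma subst_absn: "subst (absn n t) s k = absn n (subst t (liftn n s) (k + n))"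
  by (induct n arbitrary: k s) auto

lemma lift_apps: "lift (apps t ts) k = apps (lift t k) (map (\<lambda>x. lift x k) ts)"
  by (induct ts arbitrary: t) auto

lemma subst_apps: "subst (apps t ts) s k = apps (subst t s k) (map (\<lambda>x. subst x s k) ts)"
  by (induct ts arbitrary: t) auto

lemma absn_add: "absn (m + n) t = absn m (absn n t)"
  by (induct m) auto

lemma apps_append: "apps t (xs @ ys) = apps (apps t xs) ys"
  by (induct xs arbitrary: t) auto

lemma apps_Var_not_abs[simp]: "\<not> is_abs (apps (Var j) Ms)"
  by (induct Ms rule: rev_induct) auto

lemma nabs_apps_Var[simp]: "nabs (apps (Var j) Ms) = 0"
  by (induct Ms rule: rev_induct) auto

lemma body_apps_Var[simp]: "body (apps (Var j) Ms) = apps (Var j) Ms"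
  by (induct Ms rule: rev_induct) auto

lemma hd_apps[simp]: "hd_of (apps t Ms) = hd_of t"
  by (induct Ms arbitrary: t) auto

lemma args_apps[simp]: "args_of (apps t Ms) = args_of t @ Ms"
  by (induct Ms arbitrary: t) auto

lemma nabs_absn[simp]: "nabs (absn m (apps (Var j) Ms)) = m"
  by (induct m) auto

lemma body_absn[simp]: "body (absn m (apps (Var j) Ms)) = apps (Var j) Ms"
  by (induct m) auto

lemma absn_apps_inj:
  assumes "absn m (apps (Var j) Ms) = absn m' (apps (Var j') Ms')"
  shows "m = m' \<and> j = j' \<and> Ms = Ms'"
proof -
  have "m = m'" using arg_cong[OF assms, of nabs] by simp
  moreover have "hd_of (body (absn m (apps (Var j) Ms))) = hd_of (body (absn m' (apps (Var j') Ms')))"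
    using assms by simp
  moreover have "args_of (body (absn m (apps (Var j) Ms))) = args_of (body (absn m' (apps (Var j') Ms')))"
    using assms by simp
  ultimately show ?thesis by simp
qed

lemma is_abs_lift[simp]: "is_abs (lift s k) = is_abs s"
  by (cases s) auto

lemma hred_lift: "hred s t \<Longrightarrow> hred (lift s k) (lift t k)"
proof (induct arbitrary: k rule: hred.induct)
  case (beta s t)
  then show ?case using hred.beta[of "lift s (Suc k)" "lift t k"] by simp
next
  case (appL s s' t)
  then show ?case by (auto intro: hred.appL)
next
  case (abs s s')
  then show ?case by (auto intro: hred.abs)
qed

lemma hred_not_Var: "hred (Var i) t \<Longrightarrow> False"
  by (cases rule: hred.cases) auto

lemma hred_subst: "hred s t \<Longrightarrow> hred (subst s u k) (subst t u k)"
proof (induct arbitrary: k u rule: hred.induct)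
  case (beta s t)
  then show ?case using hred.beta[of "subst s (lift u 0) (Suc k)" "subst t u k"]
    using subst_subst[of 0 k s u t] by simp
next
  case (appL s s' t)
  then have "\<not> is_abs (subst s u k)" by (cases s) (auto dest: hred_not_Var)
  then show ?case using appL by (auto intro: hred.appL)
next
  case (abs s s')
  then show ?case by (auto intro: hred.abs)
qed

lemma hreds_lift: "hred\<^sup>*\<^sup>* s t \<Longrightarrow> hred\<^sup>*\<^sup>* (lift s k) (lift t k)"
  by (induct rule: rtranclp_induct) (auto intro: rtranclp.rtrancl_into_rtrancl hred_lift)

lemma hreds_liftn: "hred\<^sup>*\<^sup>* s t \<Longrightarrow> hred\<^sup>*\<^sup>* (liftn n s) (liftn n t)"
  by (induct n arbitrary: s t) (auto intro: hreds_lift)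

lemma hreds_subst: "hred\<^sup>*\<^sup>* s t \<Longrightarrow> hred\<^sup>*\<^sup>* (subst s u k) (subst t u k)"
  by (induct rule: rtranclp_induct) (auto intro: rtranclp.rtrancl_into_rtrancl hred_subst)

lemma hreds_Abs: "hred\<^sup>*\<^sup>* s t \<Longrightarrow> hred\<^sup>*\<^sup>* (Abs s) (Abs t)"
  by (induct rule: rtranclp_induct) (auto intro: rtranclp.rtrancl_into_rtrancl hred.abs)

lemma hreds_absn: "hred\<^sup>*\<^sup>* s t \<Longrightarrow> hred\<^sup>*\<^sup>* (absn n s) (absn n t)"
  by (induct n) (auto intro: hreds_Abs)

inductive_cases hred_AppE: "hred (App s t) u"
inductive_cases hred_AbsE: "hred (Abs s) u"

lemma hred_det: "hred s t \<Longrightarrow> hred s t' \<Longrightarrow> t = t'"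
proof (induct arbitrary: t' rule: hred.induct)
  case (beta s t)
  from beta show ?case
  proof (rule hred_AppE)
    fix s0 assume "Abs s = Abs s0" "t' = subst s0 t 0"
    then show ?thesis by simp
  next
    fix s'' assume "\<not> is_abs (Abs s)"
    then show ?thesis by simp
  qed
next
  case (appL s s' t)
  from appL.prems show ?case
  proof (rule hred_AppE)
    fix s0 assume "s = Abs s0" 
    then show ?thesis using appL.hyps(3) by simp
  next
    fix s'' assume a: "t' = App s'' t" "hred s s''"
    have "s' = s''" using appL.hyps(2) a(2) by metis
    then show ?thesis using a(1) by simp
  qed
next
  case (abs s s')
  from abs.prems show ?case
  proof (rule hred_AbsE)
    fix s'' assume a: "t' = Abs s''" "hred s s''"
    have "s' = s''" using abs.hyps(2) a(2) by metis
    then show ?thesis using a(1) by simp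
  qed
qed

lemma hnf_normal: "hred s t \<Longrightarrow> is_hnf s \<Longrightarrow> False"
proof (induct rule: hred.induct)
  case (beta s t)
  then show ?case by (simp add: is_hnf_def)
next
  case (appL s s' t)
  then have "is_hnf s" by (cases s) (auto simp: is_hnf_def)
  then show ?case using appL by simp
next
  case (abs s s')
  then show ?case by (simp add: is_hnf_def)
qed

lemma hnf_normal_rt: "hred\<^sup>*\<^sup>* s t \<Longrightarrow> is_hnf s \<Longrightarrow> t = s"
  by (induct rule: converse_rtranclp_induct) (auto dest: hnf_normal)

lemma hnf_unique: "hred\<^sup>*\<^sup>* a b \<Longrightarrow> hred\<^sup>*\<^sup>* a c \<Longrightarrow> is_hnf b \<Longrightarrow> is_hnf c \<Longrightarrow> b = c"
proof (induct arbitrary: c rule: converse_rtranclp_induct)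
  case base
  then show ?case using hnf_normal_rt by metis
next
  case (step a a1)
  note IH = step.hyps(3) and st = step.hyps(1) and pr = step.prems
  from step.prems(1) show ?case
  proof (cases rule: converse_rtranclpE)
    case base
    then show ?thesis using step hnf_normal by blast
  next
    case (step a2)
    then have "a2 = a1" using hred_det st by blast
    then have "hred\<^sup>*\<^sup>* a1 c" using step(2) by simp
    from IH[OF this] pr show ?thesis by blast
  qed
qed

lemma is_hnf_form: "is_hnf (absn m (apps (Var j) Ms))"
  by (simp add: is_hnf_def)

lemma BT_hnf:
  assumes "hred\<^sup>*\<^sup>* M (absn m (apps (Var j) Ms))"
  shows "BT M = Nd m j (map BT Ms)"
proof -
  let ?H = "absn m (apps (Var j) Ms)"
  have h: "has_hnf M" using assms is_hnf_form unfolding has_hnf_def by blast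
  have e: "hnf_of M = ?H" unfolding hnf_of_def
  proof (rule the_equality)
    show "hred\<^sup>*\<^sup>* M ?H \<and> is_hnf ?H" using assms is_hnf_form by simp
    fix N assume "hred\<^sup>*\<^sup>* M N \<and> is_hnf N"
    then show "N = ?H" using hnf_unique[OF _ assms _ is_hnf_form] by simp
  qed
  have 1: "BT M = Nd (nabs (hnf_of M)) (hvar (body (hnf_of M))) (map BT (args_of (body (hnf_of M))))"
    using BT.code[of M] h by (simp only: if_True)
  have 2: "hvar (apps (Var j) Ms) = j" by (simp add: hvar_def)
  have 3: "args_of (apps (Var j) Ms) = Ms" by simp
  show ?thesis unfolding 1 e by (simp only: nabs_absn body_absn 2 3)
qed



datatype fsh = FL | FN "fsh list"

lemma size_nth_less: "i < length Ss \<Longrightarrow> size (Ss ! i) < Suc (size_list size Ss)"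
  using size_list_estimation'[of "Ss ! i" Ss "size (Ss ! i)" size] nth_mem[of i Ss] by simp

function EXs :: "fsh \<Rightarrow> nat \<Rightarrow> trm \<Rightarrow> bool" where
  "EXs FL x M = True"
| "EXs (FN Ss) x M = (\<exists>Ms. hred\<^sup>*\<^sup>* M (absn (length Ss) (apps (Var (x + length Ss)) Ms))
       \<and> length Ms = length Ss \<and> (\<forall>i<length Ss. EXs (Ss ! i) (length Ss - 1 - i) (Ms ! i)))"
  by pat_completeness auto
termination
  by (relation "measure (\<lambda>(S, x, M). size S)") (auto simp: size_nth_less)

function fmerge :: "fsh \<Rightarrow> fsh \<Rightarrow> fsh" where
  "fmerge FL T = FL"
| "fmerge (FN Ss) FL = FL"
| "fmerge (FN Ss) (FN Ts) = FN (map (\<lambda>i. fmerge (Ts ! i) (Ss ! i)) [0..<min (length Ss) (length Ts)]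
      @ drop (length Ts) Ss @ drop (length Ss) Ts)"
  by pat_completeness auto
termination
  by (relation "measure (\<lambda>(S, T). size S + size T)") (auto dest!: size_nth_less)

fun full :: "nat \<Rightarrow> fsh \<Rightarrow> bool" where
  "full 0 S = True"
| "full (Suc n) FL = False"
| "full (Suc n) (FN Ss) = (\<forall>S\<in>set Ss. full n S)"

fun hasdepth :: "nat \<Rightarrow> fsh \<Rightarrow> bool" where
  "hasdepth 0 S = True"
| "hasdepth (Suc n) FL = False"
| "hasdepth (Suc n) (FN Ss) = (\<exists>S\<in>set Ss. hasdepth n S)"

lemma full_mono: "full (Suc n) S \<Longrightarrow> full n S"
  by (induct n arbitrary: S) (auto elim: full.elims)

lemma hasdepth_mono: "hasdepth (Suc n) S \<Longrightarrow> hasdepth n S"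
proof (induct n arbitrary: S)
  case 0
  then show ?case by simp
next
  case (Suc n)
  then show ?case by (cases S) auto
qed

lemma full_FN_nil: "full n (FN [])"
  by (cases n) auto

lemma full_fmerge: "full n S \<Longrightarrow> full n T \<Longrightarrow> full n (fmerge S T)"
proof (induct n arbitrary: S T)
  case 0
  then show ?case by simp
next
  case (Suc n)
  from Suc.prems obtain Ss Ts where S: "S = FN Ss" and T: "T = FN Ts"
    by (cases S; cases T) auto
  have a: "\<forall>X\<in>set Ss. full n X" and b: "\<forall>X\<in>set Ts. full n X" using Suc.prems S T by auto
  have "\<forall>X\<in>set (map (\<lambda>i. fmerge (Ts ! i) (Ss ! i)) [0..<min (length Ss) (length Ts)]). full n X"
    using a b Suc.hyps by auto
  moreover have "\<forall>X\<in>set (drop (length Ts) Ss). full n X" using a by (meson in_set_dropD)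
  moreover have "\<forall>X\<in>set (drop (length Ss) Ts). full n X" using b by (meson in_set_dropD)
  ultimately show ?case unfolding S T by auto
qed

lemma hasdepth_FN_I: "X \<in> set L \<Longrightarrow> hasdepth d X \<Longrightarrow> hasdepth (Suc d) (FN L)"
  by auto

lemma depth_fmerge:
  "(hasdepth d S \<and> full d T) \<or> (hasdepth d T \<and> full d S) \<Longrightarrow> hasdepth d (fmerge S T)"
proof (induct d arbitrary: S T)
  case 0
  then show ?case by simp
next
  case (Suc d)
  from Suc.prems obtain Ss Ts where S: "S = FN Ss" and T: "T = FN Ts"
    by (cases S; cases T) auto
  have FM: "fmerge S T = FN (map (\<lambda>i. fmerge (Ts ! i) (Ss ! i)) [0..<min (length Ss) (length Ts)]
      @ drop (length Ts) Ss @ drop (length Ss) Ts)" unfolding S T by (rule fmerge.simps(3))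
  let ?L = "map (\<lambda>i. fmerge (Ts ! i) (Ss ! i)) [0..<min (length Ss) (length Ts)]
      @ drop (length Ts) Ss @ drop (length Ss) Ts"
  from Suc.prems show ?case
  proof
    assume h: "hasdepth (Suc d) S \<and> full (Suc d) T"
    then obtain i where i: "i < length Ss" "hasdepth d (Ss ! i)" using S
      by (auto simp: in_set_conv_nth)
    show ?thesis
    proof (cases "i < length Ts")
      case True
      then have "full d (Ts ! i)" using h T by auto
      then have "hasdepth d (fmerge (Ts ! i) (Ss ! i))" using Suc.hyps[of "Ts ! i" "Ss ! i"] i(2) by simp
      moreover have "fmerge (Ts ! i) (Ss ! i) \<in> set ?L" using i True by auto
      ultimately show ?thesis unfolding FM by (rule hasdepth_FN_I[rotated])
    next
      case False
      have e1: "drop (length Ts) Ss ! (i - length Ts) = Ss ! i" using False i by simp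
      have e2: "i - length Ts < length (drop (length Ts) Ss)" using False i by simp
      have "Ss ! i \<in> set (drop (length Ts) Ss)" using nth_mem[OF e2] unfolding e1 .
      then have "Ss ! i \<in> set ?L" by simp
      then show ?thesis unfolding FM using i(2) by (rule hasdepth_FN_I)
    qed
  next
    assume h: "hasdepth (Suc d) T \<and> full (Suc d) S"
    then obtain i where i: "i < length Ts" "hasdepth d (Ts ! i)" using T
      by (auto simp: in_set_conv_nth)
    show ?thesis
    proof (cases "i < length Ss")
      case True
      then have "full d (Ss ! i)" using h S by auto
      then have "hasdepth d (fmerge (Ts ! i) (Ss ! i))" using Suc.hyps[of "Ts ! i" "Ss ! i"] i(2) by simp
      moreover have "fmerge (Ts ! i) (Ss ! i) \<in> set ?L" using i True by auto
      ultimately show ?thesis unfolding FM by (rule hasdepth_FN_I[rotated])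
    next
      case False
      have e1: "drop (length Ss) Ts ! (i - length Ss) = Ts ! i" using False i by simp
      have e2: "i - length Ss < length (drop (length Ss) Ts)" using False i by simp
      have "Ts ! i \<in> set (drop (length Ss) Ts)" using nth_mem[OF e2] unfolding e1 .
      then have "Ts ! i \<in> set ?L" by simp
      then show ?thesis unfolding FM using i(2) by (rule hasdepth_FN_I)
    qed
  qed
qed

lemma EXs_back: "hred\<^sup>*\<^sup>* M M' \<Longrightarrow> EXs S x M' \<Longrightarrow> EXs S x M"
proof (cases S)
  case FL
  then show ?thesis by simp
next
  case (FN Ss)
  assume r: "hred\<^sup>*\<^sup>* M M'" and e: "EXs S x M'"
  from e obtain Ms where "hred\<^sup>*\<^sup>* M' (absn (length Ss) (apps (Var (x + length Ss)) Ms))"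
    "length Ms = length Ss" "\<forall>i<length Ss. EXs (Ss ! i) (length Ss - 1 - i) (Ms ! i)"
    unfolding FN by auto
  then show ?thesis unfolding FN using r by (auto intro: rtranclp_trans)
qed

lemma EXs_lift: "EXs S x M \<Longrightarrow> EXs S (if x < k then x else Suc x) (lift M k)"
proof (induct S x M arbitrary: k rule: EXs.induct)
  case (1 x M)
  then show ?case by simp
next
  case (2 Ss x M)
  let ?m = "length Ss"
  from "2.prems" obtain Ms where h: "hred\<^sup>*\<^sup>* M (absn ?m (apps (Var (x + ?m)) Ms))"
    and l: "length Ms = ?m" and c: "\<forall>i<?m. EXs (Ss ! i) (?m - 1 - i) (Ms ! i)"
    by auto
  let ?x = "if x < k then x else Suc x"
  have "hred\<^sup>*\<^sup>* (lift M k) (lift (absn ?m (apps (Var (x + ?m)) Ms)) k)"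
    using h by (rule hreds_lift)
  also have "lift (absn ?m (apps (Var (x + ?m)) Ms)) k
      = absn ?m (apps (Var (?x + ?m)) (map (\<lambda>t. lift t (k + ?m)) Ms))"
    by (simp add: lift_absn lift_apps)
  finally have h': "hred\<^sup>*\<^sup>* (lift M k) (absn ?m (apps (Var (?x + ?m)) (map (\<lambda>t. lift t (k + ?m)) Ms)))" .
  have c': "EXs (Ss ! i) (?m - 1 - i) (map (\<lambda>t. lift t (k + ?m)) Ms ! i)" if i: "i < ?m" for i
  proof -
    have "EXs (Ss ! i) (if ?m - 1 - i < k + ?m then ?m - 1 - i else Suc (?m - 1 - i)) (lift (Ms ! i) (k + ?m))"
      using "2.hyps"[OF i, of Ms "k + ?m"] c i by blast
    moreover have "?m - 1 - i < k + ?m" using i by arith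
    ultimately have "EXs (Ss ! i) (?m - 1 - i) (lift (Ms ! i) (k + ?m))" by (simp only: if_True)
    then show ?thesis using i l by simp
  qed
  show ?case using h' c' l by auto
qed

lemma EXs_liftn: "EXs S x M \<Longrightarrow> EXs S (x + n) (liftn n M)"
proof (induct n arbitrary: x M)
  case 0
  then show ?case by simp
next
  case (Suc n)
  have "EXs S (Suc x) (lift M 0)" using EXs_lift[OF Suc.prems, of 0] by simp
  then have "EXs S (Suc x + n) (liftn n (lift M 0))" by (rule Suc.hyps)
  then show ?case by simp
qed

lemma EXs_subst: "EXs S x M \<Longrightarrow> x \<noteq> k \<Longrightarrow> EXs S (if x < k then x else x - 1) (subst M N k)"
proof (induct S x M arbitrary: k N rule: EXs.induct)
  case (1 x M)
  then show ?case by simp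
next
  case (2 Ss x M)
  let ?m = "length Ss"
  from "2.prems" obtain Ms where h: "hred\<^sup>*\<^sup>* M (absn ?m (apps (Var (x + ?m)) Ms))"
    and l: "length Ms = ?m" and c: "\<forall>i<?m. EXs (Ss ! i) (?m - 1 - i) (Ms ! i)"
    by auto
  let ?x = "if x < k then x else x - 1"
  let ?N = "liftn ?m N"
  have "hred\<^sup>*\<^sup>* (subst M N k) (subst (absn ?m (apps (Var (x + ?m)) Ms)) N k)"
    using h by (rule hreds_subst)
  also have "subst (absn ?m (apps (Var (x + ?m)) Ms)) N k
      = absn ?m (apps (Var (?x + ?m)) (map (\<lambda>t. subst t ?N (k + ?m)) Ms))"
    using "2.prems"(2) by (auto simp add: subst_absn subst_apps)
  finally have h': "hred\<^sup>*\<^sup>* (subst M N k) (absn ?m (apps (Var (?x + ?m)) (map (\<lambda>t. subst t ?N (k + ?m)) Ms)))" .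
  have c': "EXs (Ss ! i) (?m - 1 - i) (map (\<lambda>t. subst t ?N (k + ?m)) Ms ! i)" if i: "i < ?m" for i
  proof -
    have ne: "?m - 1 - i \<noteq> k + ?m" using i by simp
    have "EXs (Ss ! i) (if ?m - 1 - i < k + ?m then ?m - 1 - i else ?m - 1 - i - 1) (subst (Ms ! i) ?N (k + ?m))"
      using "2.hyps"[OF i, of Ms "k + ?m" ?N] c i ne by blast
    moreover have "?m - 1 - i < k + ?m" using i by arith
    ultimately have "EXs (Ss ! i) (?m - 1 - i) (subst (Ms ! i) ?N (k + ?m))" by (simp only: if_True)
    then show ?thesis using i l by simp
  qed
  show ?case using h' c' l by auto
qed

lemma hreds_AbsD: "hred\<^sup>*\<^sup>* (Abs a) b \<Longrightarrow> \<exists>c. b = Abs c \<and> hred\<^sup>*\<^sup>* a c"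
proof (induct rule: rtranclp_induct)
  case base
  then show ?case by blast
next
  case (step y z)
  then obtain c where c: "y = Abs c" "hred\<^sup>*\<^sup>* a c" by blast
  from step(2) have "hred (Abs c) z" unfolding c .
  then show ?case
  proof (rule hred_AbsE)
    fix s' assume "z = Abs s'" "hred c s'"
    then show ?thesis using c(2) by (blast intro: rtranclp.rtrancl_into_rtrancl)
  qed
qed

lemma app_abs: "hred\<^sup>*\<^sup>* P (Abs T) \<Longrightarrow> hred\<^sup>*\<^sup>* (App P V) (subst T V 0)"
proof (induct rule: converse_rtranclp_induct)
  case base
  then show ?case by (rule r_into_rtranclp) (rule hred.beta)
next
  case (step y z)
  show ?case
  proof (cases "is_abs y")
    case True
    then obtain y0 where y: "y = Abs y0" by (cases y) auto
    from step(1) have "hred (Abs y0) z" unfolding y .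
    then obtain z0 where z: "z = Abs z0" "hred y0 z0" by (rule hred_AbsE) blast
    from step(2) obtain c where "Abs T = Abs c" "hred\<^sup>*\<^sup>* z0 c" using hreds_AbsD unfolding z by blast
    then have "hred\<^sup>*\<^sup>* y0 T" using z(2) by (simp add: converse_rtranclp_into_rtranclp)
    then have "hred\<^sup>*\<^sup>* (subst y0 V 0) (subst T V 0)" by (rule hreds_subst)
    moreover have "hred (App y V) (subst y0 V 0)" unfolding y by (rule hred.beta)
    ultimately show ?thesis by (rule converse_rtranclp_into_rtranclp[rotated])
  next
    case False
    then have "hred (App y V) (App z V)" using step(1) by (blast intro: hred.appL)
    then show ?thesis using step(3) by (rule converse_rtranclp_into_rtranclp)
  qed
qed

lemma app_nonabs: "hred\<^sup>*\<^sup>* P P' \<Longrightarrow> \<not> is_abs P' \<Longrightarrow> hred\<^sup>*\<^sup>* (App P V) (App P' V)"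
proof (induct rule: rtranclp_induct)
  case base
  then show ?case by simp
next
  case (step y z)
  have "\<not> is_abs y"
  proof
    assume "is_abs y"
    then obtain y0 where y: "y = Abs y0" by (cases y) auto
    from step(2) have "hred (Abs y0) z" unfolding y .
    then have "is_abs z" by (rule hred_AbsE) simp
    then show False using step(4) by simp
  qed
  then have "hred (App y V) (App z V)" using step(2) by (blast intro: hred.appL)
  then show ?case using step(3)[OF \<open>\<not> is_abs y\<close>] by (rule rtranclp.rtrancl_into_rtrancl[rotated])
qed

lemma hred_apps: "hred s s' \<Longrightarrow> \<not> is_abs s \<Longrightarrow> hred (apps s rs) (apps s' rs)"
proof (induct rs arbitrary: s s')
  case Nil
  then show ?case by simp
next
  case (Cons r rs)
  have "hred (App s r) (App s' r)" using Cons.prems by (rule hred.appL)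
  then have "hred (apps (App s r) rs) (apps (App s' r) rs)" by (rule Cons.hyps) simp
  then show ?case by simp
qed

lemma ITER:
  assumes IH: "\<And>j K y' A B. j < length Ss \<Longrightarrow> j < length Ts \<Longrightarrow> EXs (Ts ! j) K A \<Longrightarrow> EXs (Ss ! j) y' B
      \<Longrightarrow> EXs (fmerge (Ts ! j) (Ss ! j)) y' (subst A B K)"
  and hP: "hred\<^sup>*\<^sup>* P (absn (length Ts) (apps (Var (Y + length Ts)) Ws))"
  and lW: "length Ws = length Ts"
  and W: "\<forall>j<length Ts. EXs (Ts ! j) (length Ts - 1 - j) (Ws ! j)"
  and lV: "length Vs = length Ss" and lx: "length xs = length Ss"
  and V: "\<forall>j<length Ss. EXs (Ss ! j) (xs ! j) (Vs ! j)"
  shows "i \<le> length Ss \<Longrightarrow> \<exists>Cs Rest.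
    hred\<^sup>*\<^sup>* (apps P (take i Vs)) (absn (length Ts - i) (apps (Var (Y + (length Ts - i))) (Cs @ Rest)))
    \<and> length Cs = min i (length Ts)
    \<and> (\<forall>j<min i (length Ts). EXs (fmerge (Ts ! j) (Ss ! j)) (xs ! j + (length Ts - i)) (Cs ! j))
    \<and> (if i \<le> length Ts then length Rest = length Ts - i
          \<and> (\<forall>j<length Ts - i. EXs (Ts ! (i + j)) (length Ts - i - 1 - j) (Rest ! j))
       else Rest = drop (length Ts) (take i Vs))"
proof (induct i)
  case 0
  show ?case
    by (rule exI[of _ "[]"], rule exI[of _ Ws]) (use hP lW W in simp)
next
  case (Suc i)
  let ?l = "length Ts"
  have iS: "i < length Ss" using Suc.prems by simp
  then obtain Cs Rest where
    h: "hred\<^sup>*\<^sup>* (apps P (take i Vs)) (absn (?l - i) (apps (Var (Y + (?l - i))) (Cs @ Rest)))"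
    and lC: "length Cs = min i ?l"
    and C: "\<forall>j<min i ?l. EXs (fmerge (Ts ! j) (Ss ! j)) (xs ! j + (?l - i)) (Cs ! j)"
    and R: "if i \<le> ?l then length Rest = ?l - i
          \<and> (\<forall>j<?l - i. EXs (Ts ! (i + j)) (?l - i - 1 - j) (Rest ! j))
       else Rest = drop ?l (take i Vs)"
    using Suc.hyps by fastforce
  let ?V = "Vs ! i"
  have tk: "take (Suc i) Vs = take i Vs @ [?V]" using iS lV by (simp add: take_Suc_conv_app_nth)
  have ap: "apps P (take (Suc i) Vs) = App (apps P (take i Vs)) ?V" unfolding tk by simp
  show ?case
  proof (cases "i < ?l")
    case True
    define r where "r = ?l - i - 1"
    have lr: "?l - i = Suc r" using True unfolding r_def by simp
    have lr2: "?l - Suc i = r" using lr by simp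
    have R': "length Rest = ?l - i \<and> (\<forall>j<?l - i. EXs (Ts ! (i + j)) (?l - i - 1 - j) (Rest ! j))"
      using R unfolding if_P[OF less_imp_le[OF True]] .
    have lR: "length Rest = Suc r" "\<forall>j<Suc r. EXs (Ts ! (i + j)) (r - j) (Rest ! j)"
      using R' unfolding lr by simp_all
    then obtain R0 Rt where RR: "Rest = R0 # Rt" by (cases Rest) auto
    define f where "f = (\<lambda>t. subst t (liftn r ?V) r)"
    have h1: "hred\<^sup>*\<^sup>* (apps P (take i Vs)) (Abs (absn r (apps (Var (Y + Suc r)) (Cs @ Rest))))"
      using h unfolding lr by simp
    have "hred\<^sup>*\<^sup>* (apps P (take (Suc i) Vs)) (subst (absn r (apps (Var (Y + Suc r)) (Cs @ Rest))) ?V 0)"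
      unfolding ap by (rule app_abs[OF h1])
    also have "subst (absn r (apps (Var (Y + Suc r)) (Cs @ Rest))) ?V 0
        = absn r (apps (Var (Y + r)) ((map f Cs @ [f R0]) @ map f Rt))"
      by (simp add: subst_absn subst_apps f_def RR)
    finally have h2: "hred\<^sup>*\<^sup>* (apps P (take (Suc i) Vs))
        (absn (?l - Suc i) (apps (Var (Y + (?l - Suc i))) ((map f Cs @ [f R0]) @ map f Rt)))"
      unfolding lr2 .
    have mi: "min (Suc i) ?l = Suc i" "min i ?l = i" using True by auto
    have C1: "EXs (fmerge (Ts ! j) (Ss ! j)) (xs ! j + (?l - Suc i)) ((map f Cs @ [f R0]) ! j)"
      if j: "j < Suc i" for j
    proof (cases "j < i")
      case True
      have "EXs (fmerge (Ts ! j) (Ss ! j)) (xs ! j + Suc r) (Cs ! j)" using C True lr mi by auto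
      then have "EXs (fmerge (Ts ! j) (Ss ! j)) (if xs ! j + Suc r < r then xs ! j + Suc r else xs ! j + Suc r - 1)
          (subst (Cs ! j) (liftn r ?V) r)"
        by (rule EXs_subst) simp
      then show ?thesis unfolding lr2 using True lC mi lr by (simp add: nth_append f_def)
    next
      case False
      then have ji: "j = i" using j by simp
      have a: "EXs (Ts ! i) r R0" using lR(2) RR by fastforce
      have b: "EXs (Ss ! i) (xs ! i + r) (liftn r ?V)" using V iS by (simp add: EXs_liftn)
      have "EXs (fmerge (Ts ! i) (Ss ! i)) (xs ! i + r) (subst R0 (liftn r ?V) r)"
        by (rule IH[OF iS True a b])
      then show ?thesis unfolding lr2 using ji lC mi lr by (simp add: nth_append f_def)
    qed
    have R1: "EXs (Ts ! (Suc i + j)) (?l - Suc i - 1 - j) (map f Rt ! j)" if j: "j < ?l - Suc i" for j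
    proof -
      have jr: "j < r" using j lr by simp
      have "EXs (Ts ! (i + Suc j)) (r - Suc j) (Rest ! Suc j)" using lR(2)[rule_format, of "Suc j"] jr by simp
      then have "EXs (Ts ! (i + Suc j)) (r - Suc j) (Rt ! j)" using RR by simp
      then have "EXs (Ts ! (i + Suc j)) (if r - Suc j < r then r - Suc j else r - Suc j - 1)
          (subst (Rt ! j) (liftn r ?V) r)"
        by (rule EXs_subst) (use jr in simp)
      moreover have "j < length Rt" using lR(1) RR jr by simp
      moreover have e: "?l - Suc i - 1 - j = r - Suc j" using lr by arith
      ultimately show ?thesis unfolding e using jr by (simp add: f_def)
    qed
    show ?thesis
    proof (intro exI conjI)
      show "hred\<^sup>*\<^sup>* (apps P (take (Suc i) Vs))
        (absn (?l - Suc i) (apps (Var (Y + (?l - Suc i))) ((map f Cs @ [f R0]) @ map f Rt)))" by (rule h2)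
      show "length (map f Cs @ [f R0]) = min (Suc i) ?l" using lC mi by simp
      show "\<forall>j<min (Suc i) ?l. EXs (fmerge (Ts ! j) (Ss ! j)) (xs ! j + (?l - Suc i)) ((map f Cs @ [f R0]) ! j)"
        using C1 mi by simp
      show "if Suc i \<le> ?l then length (map f Rt) = ?l - Suc i
          \<and> (\<forall>j<?l - Suc i. EXs (Ts ! (Suc i + j)) (?l - Suc i - 1 - j) (map f Rt ! j))
       else map f Rt = drop ?l (take (Suc i) Vs)"
        using True R1 lR(1) RR lr by simp
    qed
  next
    case False
    have z: "?l - i = 0" "?l - Suc i = 0" using False by auto
    have h1: "hred\<^sup>*\<^sup>* (apps P (take i Vs)) (apps (Var Y) (Cs @ Rest))" using h z by simp
    have "hred\<^sup>*\<^sup>* (apps P (take (Suc i) Vs)) (App (apps (Var Y) (Cs @ Rest)) ?V)"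
      unfolding ap by (rule app_nonabs[OF h1]) simp
    then have h2: "hred\<^sup>*\<^sup>* (apps P (take (Suc i) Vs))
        (absn (?l - Suc i) (apps (Var (Y + (?l - Suc i))) (Cs @ (Rest @ [?V]))))"
      using z by (simp add: apps_append)
    have mi: "min (Suc i) ?l = ?l" "min i ?l = ?l" using False by auto
    have Rn: "Rest @ [?V] = drop ?l (take (Suc i) Vs)"
    proof (cases "i = ?l")
      case True
      then have "Rest = []" using R by simp
      then show ?thesis using True tk iS lV by simp
    next
      case False
      then have "Rest = drop ?l (take i Vs)" using R \<open>\<not> i < ?l\<close> by simp
      moreover have "length (take i Vs) = i" using iS lV by simp
      ultimately show ?thesis using tk \<open>\<not> i < ?l\<close> by simp
    qed
    show ?thesis
    proof (intro exI conjI)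
      show "hred\<^sup>*\<^sup>* (apps P (take (Suc i) Vs))
        (absn (?l - Suc i) (apps (Var (Y + (?l - Suc i))) (Cs @ (Rest @ [?V]))))" by (rule h2)
      show "length Cs = min (Suc i) ?l" using lC mi by simp
      show "\<forall>j<min (Suc i) ?l. EXs (fmerge (Ts ! j) (Ss ! j)) (xs ! j + (?l - Suc i)) (Cs ! j)"
        using C mi z by simp
      show "if Suc i \<le> ?l then length (Rest @ [?V]) = ?l - Suc i
          \<and> (\<forall>j<?l - Suc i. EXs (Ts ! (Suc i + j)) (?l - Suc i - 1 - j) ((Rest @ [?V]) ! j))
       else Rest @ [?V] = drop ?l (take (Suc i) Vs)"
        using False Rn by simp
    qed
  qed
qed

lemma APPLY:
  assumes IH: "\<And>j K y' A B. j < length Ss \<Longrightarrow> j < length Ts \<Longrightarrow> EXs (Ts ! j) K A \<Longrightarrow> EXs (Ss ! j) y' B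
      \<Longrightarrow> EXs (fmerge (Ts ! j) (Ss ! j)) y' (subst A B K)"
  and P: "EXs (FN Ts) (y + m) P" and lV: "length Vs = m" and lS: "length Ss = m"
  and V: "\<forall>i<m. EXs (Ss ! i) (m - 1 - i) (Vs ! i)"
  shows "EXs (fmerge (FN Ss) (FN Ts)) y (absn m (apps P Vs))"
proof -
  let ?l = "length Ts"
  from P obtain Ws where hP: "hred\<^sup>*\<^sup>* P (absn ?l (apps (Var (y + m + ?l)) Ws))"
    and lW: "length Ws = ?l" and W: "\<forall>j<?l. EXs (Ts ! j) (?l - 1 - j) (Ws ! j)"
    by auto
  define xs where "xs = map (\<lambda>j. m - 1 - j) [0..<m]"
  have lx: "length xs = length Ss" using lS by (simp add: xs_def)
  have xsn: "xs ! j = m - 1 - j" if "j < m" for j using that by (simp add: xs_def)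
  have V': "\<forall>j<length Ss. EXs (Ss ! j) (xs ! j) (Vs ! j)" using V lS xsn by simp
  obtain Cs Rest where
    h: "hred\<^sup>*\<^sup>* (apps P (take m Vs)) (absn (?l - m) (apps (Var (y + m + (?l - m))) (Cs @ Rest)))"
    and lC: "length Cs = min m ?l"
    and C: "\<forall>j<min m ?l. EXs (fmerge (Ts ! j) (Ss ! j)) (xs ! j + (?l - m)) (Cs ! j)"
    and R: "if m \<le> ?l then length Rest = ?l - m
          \<and> (\<forall>j<?l - m. EXs (Ts ! (m + j)) (?l - m - 1 - j) (Rest ! j))
       else Rest = drop ?l (take m Vs)"
    using ITER[OF IH hP lW W lV[folded lS] lx V', of m] lS by blast
  define L where "L = m + (?l - m)"
  have "hred\<^sup>*\<^sup>* (absn m (apps P Vs)) (absn m (absn (?l - m) (apps (Var (y + m + (?l - m))) (Cs @ Rest))))"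
    using h lV by (simp add: hreds_absn)
  then have h': "hred\<^sup>*\<^sup>* (absn m (apps P Vs)) (absn L (apps (Var (y + L)) (Cs @ Rest)))"
    by (simp add: absn_add L_def add.assoc)
  define Rs where "Rs = map (\<lambda>i. fmerge (Ts ! i) (Ss ! i)) [0..<min m ?l] @ drop ?l Ss @ drop m Ts"
  have fm: "fmerge (FN Ss) (FN Ts) = FN Rs" using lS by (simp add: Rs_def)
  have lRs: "length Rs = L" using lS by (simp add: Rs_def L_def)
  have lCR: "length (Cs @ Rest) = L"
  proof (cases "m \<le> ?l")
    case True
    then show ?thesis using lC R by (simp add: L_def)
  next
    case False
    then show ?thesis using lC R lV by (simp add: L_def)
  qed
  have ch: "EXs (Rs ! i) (L - 1 - i) ((Cs @ Rest) ! i)" if i: "i < L" for i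
  proof (cases "i < min m ?l")
    case True
    have "EXs (fmerge (Ts ! i) (Ss ! i)) (xs ! i + (?l - m)) (Cs ! i)" using C True by blast
    moreover have "xs ! i + (?l - m) = L - 1 - i" using True xsn[of i] by (simp add: L_def)
    moreover have "Rs ! i = fmerge (Ts ! i) (Ss ! i)" using True by (simp add: Rs_def nth_append)
    moreover have "(Cs @ Rest) ! i = Cs ! i" using True lC by (simp add: nth_append)
    ultimately show ?thesis by simp
  next
    case False
    show ?thesis
    proof (cases "m \<le> ?l")
      case True
      then have R': "length Rest = ?l - m \<and> (\<forall>j<?l - m. EXs (Ts ! (m + j)) (?l - m - 1 - j) (Rest ! j))"
        using R by simp
      have im: "m \<le> i" "i < ?l" using False True i by (auto simp: L_def)
      have "EXs (Ts ! (m + (i - m))) (?l - m - 1 - (i - m)) (Rest ! (i - m))"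
        using R'[THEN conjunct2, rule_format, of "i - m"] im by simp
      moreover have "m + (i - m) = i" "?l - m - 1 - (i - m) = L - 1 - i" using im True by (auto simp: L_def)
      moreover have "Rs ! i = Ts ! i" using im lS True by (simp add: Rs_def nth_append)
      moreover have "(Cs @ Rest) ! i = Rest ! (i - m)" using im lC True by (simp add: nth_append)
      ultimately show ?thesis by simp
    next
      case mgt: False
      then have Rr: "Rest = drop ?l Vs" using R lV by simp
      have im: "?l \<le> i" "i < m" using False mgt i by (auto simp: L_def)
      have "EXs (Ss ! i) (m - 1 - i) (Vs ! i)" using V im by simp
      moreover have "m - 1 - i = L - 1 - i" using mgt by (simp add: L_def)
      moreover have "Rs ! i = Ss ! i" using im lS mgt by (simp add: Rs_def nth_append)
      moreover have "(Cs @ Rest) ! i = Vs ! i" using im lC mgt Rr lV by (simp add: nth_append)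
      ultimately show ?thesis by simp
    qed
  qed
  have "EXs (FN Rs) y (absn m (apps P Vs))"
    using h' lRs lCR ch by auto
  then show ?thesis using fm by simp
qed

lemma SUBST: "EXs S k M \<Longrightarrow> EXs T y N \<Longrightarrow> EXs (fmerge S T) y (subst M N k)"
proof (induct "size S + size T" arbitrary: S T k y M N rule: less_induct)
  case less
  show ?case
  proof (cases S)
    case FL
    then show ?thesis by simp
  next
    case (FN Ss)
    note S = FN
    show ?thesis
    proof (cases T)
      case FL
      then show ?thesis using S by simp
    next
      case (FN Ts)
      note T = FN
      let ?m = "length Ss"
      from less.prems(1) obtain Ms where hM: "hred\<^sup>*\<^sup>* M (absn ?m (apps (Var (k + ?m)) Ms))"
        and lM: "length Ms = ?m" and cM: "\<forall>i<?m. EXs (Ss ! i) (?m - 1 - i) (Ms ! i)"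
        unfolding S by auto
      let ?N = "liftn ?m N"
      define g where "g = (\<lambda>t. subst t ?N (k + ?m))"
      have "hred\<^sup>*\<^sup>* (subst M N k) (subst (absn ?m (apps (Var (k + ?m)) Ms)) N k)"
        using hM by (rule hreds_subst)
      also have "subst (absn ?m (apps (Var (k + ?m)) Ms)) N k = absn ?m (apps ?N (map g Ms))"
        by (simp add: subst_absn subst_apps g_def)
      finally have h: "hred\<^sup>*\<^sup>* (subst M N k) (absn ?m (apps ?N (map g Ms)))" .
      have PN: "EXs (FN Ts) (y + ?m) ?N" using EXs_liftn[OF less.prems(2)] T by simp
      have V: "\<forall>i<?m. EXs (Ss ! i) (?m - 1 - i) (map g Ms ! i)"
      proof (intro allI impI)
        fix i assume i: "i < ?m"
        have ne: "?m - 1 - i \<noteq> k + ?m" using i by simp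
        have "EXs (Ss ! i) (if ?m - 1 - i < k + ?m then ?m - 1 - i else ?m - 1 - i - 1) (subst (Ms ! i) ?N (k + ?m))"
          using EXs_subst[OF _ ne] cM i by blast
        moreover have "?m - 1 - i < k + ?m" using i by arith
        ultimately have "EXs (Ss ! i) (?m - 1 - i) (subst (Ms ! i) ?N (k + ?m))" by (simp only: if_True)
        then show "EXs (Ss ! i) (?m - 1 - i) (map g Ms ! i)" using i lM by (simp add: g_def)
      qed
      have IH: "EXs (fmerge (Ts ! j) (Ss ! j)) y' (subst A B K)"
        if j: "j < length Ss" "j < length Ts" and a: "EXs (Ts ! j) K A" and b: "EXs (Ss ! j) y' B"
        for j K y' A B
      proof -
        have "size (Ts ! j) + size (Ss ! j) < size S + size T"
          using size_nth_less[OF j(1)] size_nth_less[OF j(2)] S T by simp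
        then show ?thesis using less.hyps a b by blast
      qed
      have "EXs (fmerge (FN Ss) (FN Ts)) y (absn ?m (apps ?N (map g Ms)))"
        by (rule APPLY[OF IH PN]) (use lM V in simp_all)
      then have "EXs (fmerge (FN Ss) (FN Ts)) y (subst M N k)" by (rule EXs_back[OF h])
      then show ?thesis unfolding S T .
    qed
  qed
qed



definition EE :: "nat \<Rightarrow> trm \<Rightarrow> bool" where
  "EE x M = (\<forall>n. \<exists>S. full n S \<and> EXs S x M)"

lemma apps_hd_args: "apps (hd_of t) (args_of t) = t"
  by (induct t) simp_all

lemma absn_body: "absn (nabs t) (body t) = t"
  by (induct t) simp_all

lemma hnf_form:
  assumes "is_hnf H"
  shows "H = absn (nabs H) (apps (Var (hvar (body H))) (args_of (body H)))"
proof -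
  from assms obtain i where i: "hd_of (body H) = Var i" unfolding is_hnf_def by blast
  have "body H = apps (Var i) (args_of (body H))" using apps_hd_args[of "body H"] i by simp
  moreover have "hvar (body H) = i" using i by (simp add: hvar_def)
  ultimately show ?thesis using absn_body[of H] by simp
qed

lemma has_hnf_get: "has_hnf M \<Longrightarrow> hred\<^sup>*\<^sup>* M (hnf_of M) \<and> is_hnf (hnf_of M)"
  unfolding has_hnf_def hnf_of_def
  by (rule theI') (use hnf_unique in blast)

lemma BT_nohnf: "\<not> has_hnf M \<Longrightarrow> BT M = Bot"
  using BT.code[of M] by (simp only: if_False)

lemma BT_Nd:
  assumes "BT M = Nd a j Ts"
  shows "\<exists>Ms. hred\<^sup>*\<^sup>* M (absn a (apps (Var j) Ms)) \<and> Ts = map BT Ms"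
proof -
  have h: "has_hnf M"
  proof (rule ccontr)
    assume "\<not> has_hnf M"
    then have "BT M = Bot" by (rule BT_nohnf)
    with assms show False by simp
  qed
  let ?H = "hnf_of M"
  have r: "hred\<^sup>*\<^sup>* M ?H" and hn: "is_hnf ?H" using has_hnf_get[OF h] by auto
  have r': "hred\<^sup>*\<^sup>* M (absn (nabs ?H) (apps (Var (hvar (body ?H))) (args_of (body ?H))))"
    using r hnf_form[OF hn] by simp
  have "BT M = Nd (nabs ?H) (hvar (body ?H)) (map BT (args_of (body ?H)))" by (rule BT_hnf[OF r'])
  then show ?thesis using assms r' by auto
qed

lemma EXs_FN_det:
  assumes h: "hred\<^sup>*\<^sup>* M (absn m (apps (Var (x + m)) Ms))" and e: "EXs (FN Ss) x M"
  shows "length Ss = m \<and> (\<forall>i<m. EXs (Ss ! i) (m - 1 - i) (Ms ! i))"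
proof -
  from e obtain Ms' where h': "hred\<^sup>*\<^sup>* M (absn (length Ss) (apps (Var (x + length Ss)) Ms'))"
    and c: "\<forall>i<length Ss. EXs (Ss ! i) (length Ss - 1 - i) (Ms' ! i)" by auto
  have "absn m (apps (Var (x + m)) Ms) = absn (length Ss) (apps (Var (x + length Ss)) Ms')"
    using hnf_unique[OF h h' is_hnf_form is_hnf_form] .
  then have "m = length Ss" "Ms = Ms'" using absn_apps_inj by blast+
  then show ?thesis using c by simp
qed

lemma rev_upt_nth: "i < m \<Longrightarrow> rev [0..<m] ! i = m - 1 - i"
  by (simp add: rev_nth)

lemma A_lemma: "eta_le (Nd 0 x []) (BT M) \<Longrightarrow> \<exists>S. full n S \<and> EXs S x M"
proof (induct n arbitrary: x M)
  case 0
  show ?case by (rule exI[of _ FL]) simp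
next
  case (Suc n)
  obtain Us Ws m Vs' n0 y where nd: "Nd 0 x [] = Nd n0 y Us"
    "BT M = Nd (n0 + m) (y + m) (map (bt_shift m 0) Ws @ Vs')" "list_all2 eta_le Us Ws"
    "list_all2 eta_le (map (\<lambda>j. Nd 0 j []) (rev [0..<m])) Vs'"
    by (rule eta_le.cases[OF Suc.prems]) auto
  show ?case
  proof -
    from nd(1) have e: "n0 = 0" "y = x" "Us = []" by auto
    then have "Ws = []" using nd(3) by simp
    then have bt: "BT M = Nd m (x + m) Vs'" using nd e by simp
    obtain Ms where hM: "hred\<^sup>*\<^sup>* M (absn m (apps (Var (x + m)) Ms))" and V: "Vs' = map BT Ms"
      using BT_Nd[OF bt] by blast
    have la: "list_all2 eta_le (map (\<lambda>j. Nd 0 j []) (rev [0..<m])) (map BT Ms)" using nd(4) V by simp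
    then have lM: "length Ms = m" using list_all2_lengthD by fastforce
    have "\<forall>i<m. eta_le (Nd 0 (m - 1 - i) []) (BT (Ms ! i))"
    proof (intro allI impI)
      fix i assume i: "i < m"
      have "eta_le (map (\<lambda>j. Nd 0 j []) (rev [0..<m]) ! i) (map BT Ms ! i)"
        using list_all2_nthD[OF la] i by simp
      then show "eta_le (Nd 0 (m - 1 - i) []) (BT (Ms ! i))" using i lM by (simp add: rev_upt_nth)
    qed
    then have "\<forall>i. \<exists>S. i < m \<longrightarrow> full n S \<and> EXs S (m - 1 - i) (Ms ! i)" using Suc.hyps by blast
    then obtain f where f: "\<forall>i. i < m \<longrightarrow> full n (f i) \<and> EXs (f i) (m - 1 - i) (Ms ! i)"
      by (rule choice_iff[THEN iffD1, elim_format]) blast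
    show ?thesis
    proof (rule exI[of _ "FN (map f [0..<m])"], intro conjI)
      show "full (Suc n) (FN (map f [0..<m]))" using f by auto
      show "EXs (FN (map f [0..<m])) x M" using f hM lM by auto
    qed
  qed
qed

lemma B_lemma: "EE x M \<Longrightarrow> eta_le (Nd 0 x []) (BT M)"
proof (rule eta_le.coinduct[where X = "\<lambda>U V. \<exists>x M. U = Nd 0 x [] \<and> V = BT M \<and> EE x M"])
  assume "EE x M"
  then show "\<exists>x' M'. Nd 0 x [] = Nd 0 x' [] \<and> BT M = BT M' \<and> EE x' M'" by blast
next
  fix x1 x2
  assume "\<exists>x M. x1 = Nd 0 x [] \<and> x2 = BT M \<and> EE x M"
  then obtain x M where x1: "x1 = Nd 0 x []" and x2: "x2 = BT M" and E: "EE x M" by blast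
  from E obtain S where "full 1 S" "EXs S x M" unfolding EE_def by blast
  then obtain Ss where S: "S = FN Ss" and "EXs (FN Ss) x M" by (cases S) auto
  then obtain Ms where hM: "hred\<^sup>*\<^sup>* M (absn (length Ss) (apps (Var (x + length Ss)) Ms))"
    and lM: "length Ms = length Ss" by auto
  let ?m = "length Ss"
  have bt: "BT M = Nd ?m (x + ?m) (map BT Ms)" by (rule BT_hnf[OF hM])
  have ch: "EE (?m - 1 - i) (Ms ! i)" if i: "i < ?m" for i
    unfolding EE_def
  proof
    fix n
    from E obtain S' where f: "full (Suc n) S'" and e: "EXs S' x M" unfolding EE_def by blast
    then obtain Ss' where S': "S' = FN Ss'" by (cases S') auto
    have d: "length Ss' = ?m \<and> (\<forall>i<?m. EXs (Ss' ! i) (?m - 1 - i) (Ms ! i))"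
      by (rule EXs_FN_det[OF hM]) (use e S' in simp)
    then have "full n (Ss' ! i)" using f S' i by auto
    then show "\<exists>S. full n S \<and> EXs S (?m - 1 - i) (Ms ! i)" using d i by blast
  qed
  have "list_all2 (\<lambda>u v. (\<exists>x M. u = Nd 0 x [] \<and> v = BT M \<and> EE x M) \<or> eta_le u v)
      (map (\<lambda>j. Nd 0 j []) (rev [0..<?m])) (map BT Ms)"
    unfolding list_all2_conv_all_nth
  proof (intro conjI allI impI)
    show "length (map (\<lambda>j. Nd 0 j []) (rev [0..<?m])) = length (map BT Ms)" using lM by simp
    fix i assume "i < length (map (\<lambda>j. Nd 0 j []) (rev [0..<?m]))"
    then have i: "i < ?m" by simp
    show "(\<exists>x M. map (\<lambda>j. Nd 0 j []) (rev [0..<?m]) ! i = Nd 0 x [] \<and> map BT Ms ! i = BT M \<and> EE x M)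
        \<or> eta_le (map (\<lambda>j. Nd 0 j []) (rev [0..<?m]) ! i) (map BT Ms ! i)"
      using ch[OF i] i lM by (auto simp add: rev_upt_nth)
  qed
  then show "x1 = Bot \<and> x2 = Bot \<or>
    (\<exists>Us Ws m Vs' n y. x1 = Nd n y Us \<and> x2 = Nd (n + m) (y + m) (map (bt_shift m 0) Ws @ Vs') \<and>
       list_all2 (\<lambda>u v. (\<exists>x M. u = Nd 0 x [] \<and> v = BT M \<and> EE x M) \<or> eta_le u v) Us Ws \<and>
       list_all2 (\<lambda>u v. (\<exists>x M. u = Nd 0 x [] \<and> v = BT M \<and> EE x M) \<or> eta_le u v)
         (map (\<lambda>j. Nd 0 j []) (rev [0..<m])) Vs')"
    using x1 x2 bt by force
qed

fun tdeep :: "nat \<Rightarrow> bt \<Rightarrow> bool" where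
  "tdeep 0 T = True"
| "tdeep (Suc d) T = (case T of Bot \<Rightarrow> False | Nd a b Ts \<Rightarrow> (\<exists>T'\<in>set Ts. tdeep d T'))"

lemma tdeep_mono: "tdeep (Suc d) T \<Longrightarrow> tdeep d T"
proof (induct d arbitrary: T)
  case 0
  then show ?case by simp
next
  case (Suc d)
  then show ?case by (cases T) auto
qed

lemma tdeep_mono': "tdeep d' T \<Longrightarrow> d \<le> d' \<Longrightarrow> tdeep d T"
proof (induct d' arbitrary: d)
  case 0
  then show ?case by simp
next
  case (Suc d')
  show ?case
  proof (cases "d = Suc d'")
    case True
    then show ?thesis using Suc.prems(1) by simp
  next
    case False
    then have "d \<le> d'" using Suc.prems(2) by simp
    moreover have "tdeep d' T" using tdeep_mono Suc.prems(1) by blast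
    ultimately show ?thesis using Suc.hyps by blast
  qed
qed

lemma not_tdeep_finite: "\<not> tdeep d T \<Longrightarrow> bt_finite T"
proof (induct d arbitrary: T)
  case 0
  then show ?case by simp
next
  case (Suc d)
  show ?case
  proof (cases T)
    case Bot
    then show ?thesis by (simp add: bt_finite.intros(1))
  next
    case (Nd a b Ts)
    then have "\<forall>T'\<in>set Ts. \<not> tdeep d T'" using Suc.prems by simp
    then show ?thesis unfolding Nd using Suc.hyps by (blast intro: bt_finite.intros(2))
  qed
qed

lemma finite_not_tdeep: "bt_finite T \<Longrightarrow> \<exists>d. \<not> tdeep d T"
proof (induct rule: bt_finite.induct)
  case 1
  show ?case by (rule exI[of _ 1]) simp
next
  case (2 Ts n y)
  define f where "f = (\<lambda>T. SOME d. \<not> tdeep d T)"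
  have f: "\<not> tdeep (f T) T" if "T \<in> set Ts" for T
    unfolding f_def using 2 that by (metis someI_ex)
  define D where "D = Max (insert 0 (f ` set Ts))"
  have "f T \<le> D" if "T \<in> set Ts" for T unfolding D_def using that by simp
  then have "\<not> tdeep D T" if "T \<in> set Ts" for T using f that tdeep_mono' by blast
  then show ?case by (intro exI[of _ "Suc D"]) simp
qed

lemma C1_lemma: "EXs S x M \<Longrightarrow> hasdepth d S \<Longrightarrow> tdeep d (BT M)"
proof (induct d arbitrary: S x M)
  case 0
  then show ?case by simp
next
  case (Suc d)
  then obtain Ss where S: "S = FN Ss" by (cases S) auto
  from Suc.prems obtain Ms where hM: "hred\<^sup>*\<^sup>* M (absn (length Ss) (apps (Var (x + length Ss)) Ms))"
    and lM: "length Ms = length Ss" and c: "\<forall>i<length Ss. EXs (Ss ! i) (length Ss - 1 - i) (Ms ! i)"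
    unfolding S by auto
  from Suc.prems obtain i where i: "i < length Ss" "hasdepth d (Ss ! i)"
    unfolding S by (auto simp: in_set_conv_nth)
  have "tdeep d (BT (Ms ! i))" using Suc.hyps c i by blast
  moreover have "BT (Ms ! i) \<in> set (map BT Ms)" using i lM by simp
  ultimately show ?case using BT_hnf[OF hM] by auto
qed

lemma C2_lemma: "EXs S x M \<Longrightarrow> full d S \<Longrightarrow> tdeep d (BT M) \<Longrightarrow> hasdepth d S"
proof (induct d arbitrary: S x M)
  case 0
  then show ?case by simp
next
  case (Suc d)
  then obtain Ss where S: "S = FN Ss" by (cases S) auto
  from Suc.prems obtain Ms where hM: "hred\<^sup>*\<^sup>* M (absn (length Ss) (apps (Var (x + length Ss)) Ms))"
    and lM: "length Ms = length Ss" and c: "\<forall>i<length Ss. EXs (Ss ! i) (length Ss - 1 - i) (Ms ! i)"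
    unfolding S by auto
  from Suc.prems(3) obtain T' where "T' \<in> set (map BT Ms)" "tdeep d T'"
    unfolding BT_hnf[OF hM] by auto
  then obtain i where i: "i < length Ss" "tdeep d (BT (Ms ! i))" using lM by (auto simp: in_set_conv_nth)
  have "full d (Ss ! i)" using Suc.prems(2) S i by auto
  then have "hasdepth d (Ss ! i)" using Suc.hyps c i by blast
  then show ?case using S i by auto
qed

lemma inf_shape: "EE x M \<Longrightarrow> \<not> bt_finite (BT M) \<Longrightarrow> \<exists>S. full d S \<and> hasdepth d S \<and> EXs S x M"
proof -
  assume E: "EE x M" and nf: "\<not> bt_finite (BT M)"
  from E obtain S where f: "full d S" and e: "EXs S x M" unfolding EE_def by blast
  have "tdeep d (BT M)" using nf not_tdeep_finite by blast
  then show ?thesis using C2_lemma[OF e f] f e by blast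
qed

lemma shape_inf: "(\<And>d. \<exists>S. hasdepth d S \<and> EXs S x M) \<Longrightarrow> \<not> bt_finite (BT M)"
proof
  assume h: "\<And>d. \<exists>S. hasdepth d S \<and> EXs S x M" and "bt_finite (BT M)"
  then obtain d where "\<not> tdeep d (BT M)" using finite_not_tdeep by blast
  moreover obtain S where "hasdepth d S" "EXs S x M" using h by blast
  ultimately show False using C1_lemma by blast
qed

lemma BT_lamI: "BT lamI = Nd 1 0 []"
proof -
  have "hred\<^sup>*\<^sup>* lamI (absn 1 (apps (Var 0) []))" by (simp add: lamI_def)
  then show ?thesis by (rule BT_hnf[THEN trans]) simp
qed

lemma bt_finite_Nd: "bt_finite (Nd a b Ts) \<longleftrightarrow> (\<forall>T\<in>set Ts. bt_finite T)"
proof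
  assume "bt_finite (Nd a b Ts)"
  then show "\<forall>T\<in>set Ts. bt_finite T" by (cases rule: bt_finite.cases) auto
next
  assume "\<forall>T\<in>set Ts. bt_finite T"
  then show "bt_finite (Nd a b Ts)" by (blast intro: bt_finite.intros(2))
qed

lemma Eomega_D:
  assumes "Q \<in> E_omega"
  shows "\<exists>t. hred\<^sup>*\<^sup>* Q (Abs t) \<and> EE 0 t \<and> (bt_finite (BT Q) \<longleftrightarrow> bt_finite (BT t))"
proof -
  have el: "eta_le (Nd 1 0 []) (BT Q)" using assms by (simp add: E_omega_def BT_lamI)
  obtain Us Ws m Vs' n0 y where nd: "Nd 1 0 [] = Nd n0 y Us"
    "BT Q = Nd (n0 + m) (y + m) (map (bt_shift m 0) Ws @ Vs')" "list_all2 eta_le Us Ws"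
    "list_all2 eta_le (map (\<lambda>j. Nd 0 j []) (rev [0..<m])) Vs'"
    by (rule eta_le.cases[OF el]) auto
  from nd(1) have e: "n0 = 1" "y = 0" "Us = []" by auto
  then have "Ws = []" using nd(3) by simp
  then have bt: "BT Q = Nd (Suc m) m Vs'" using nd e by simp
  obtain Ms where hM: "hred\<^sup>*\<^sup>* Q (absn (Suc m) (apps (Var m) Ms))" and V: "Vs' = map BT Ms"
    using BT_Nd[OF bt] by blast
  define t where "t = absn m (apps (Var m) Ms)"
  have r: "hred\<^sup>*\<^sup>* Q (Abs t)" using hM by (simp add: t_def)
  have btt: "BT t = Nd m m (map BT Ms)" by (rule BT_hnf) (simp add: t_def)
  have "eta_le (Nd 0 0 []) (Nd (0 + m) (0 + m) (map (bt_shift m 0) [] @ map BT Ms))"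
    by (rule eta_le.nd) (use nd(4) V in simp_all)
  then have "eta_le (Nd 0 0 []) (BT t)" using btt by simp
  then have "EE 0 t" unfolding EE_def using A_lemma by blast
  moreover have "bt_finite (BT Q) \<longleftrightarrow> bt_finite (BT t)"
    using bt V btt by (simp add: bt_finite_Nd)
  ultimately show ?thesis using r by blast
qed

lemma Eomega_I:
  assumes r: "hred\<^sup>*\<^sup>* Q (Abs t)" and E: "EE 0 t"
  shows "Q \<in> E_omega \<and> (bt_finite (BT Q) \<longleftrightarrow> bt_finite (BT t))"
proof -
  have el: "eta_le (Nd 0 0 []) (BT t)" using B_lemma[OF E] .
  from E obtain S where "full 1 S" "EXs S 0 t" unfolding EE_def by blast
  then obtain Ss where "EXs (FN Ss) 0 t" by (cases S) auto
  then obtain Ms where hM: "hred\<^sup>*\<^sup>* t (absn (length Ss) (apps (Var (0 + length Ss)) Ms))" by auto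
  let ?m = "length Ss"
  have btt: "BT t = Nd ?m ?m (map BT Ms)" using BT_hnf[OF hM] by simp
  have hQ: "hred\<^sup>*\<^sup>* Q (absn (Suc ?m) (apps (Var ?m) Ms))"
    using rtranclp_trans[OF r hreds_Abs[OF hM]] by simp
  have btQ: "BT Q = Nd (Suc ?m) ?m (map BT Ms)" by (rule BT_hnf[OF hQ])
  obtain Us Ws m Vs' n0 y where nd: "Nd 0 0 [] = Nd n0 y Us"
    "BT t = Nd (n0 + m) (y + m) (map (bt_shift m 0) Ws @ Vs')" "list_all2 eta_le Us Ws"
    "list_all2 eta_le (map (\<lambda>j. Nd 0 j []) (rev [0..<m])) Vs'"
    by (rule eta_le.cases[OF el]) auto
  from nd(1) have e: "n0 = 0" "y = 0" "Us = []" by auto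
  then have "Ws = []" using nd(3) by simp
  then have "m = ?m" "Vs' = map BT Ms" using nd(2) e btt by simp_all
  then have la: "list_all2 eta_le (map (\<lambda>j. Nd 0 j []) (rev [0..<?m])) (map BT Ms)" using nd(4) by simp
  have "eta_le (Nd 1 0 []) (Nd (1 + ?m) (0 + ?m) (map (bt_shift ?m 0) [] @ map BT Ms))"
    by (rule eta_le.nd) (use la in simp_all)
  then have "Q \<in> E_omega" unfolding E_omega_def BT_lamI using btQ by simp
  moreover have "bt_finite (BT Q) \<longleftrightarrow> bt_finite (BT t)"
    using btQ btt by (simp add: bt_finite_Nd)
  ultimately show ?thesis by blast
qed

lemma bcomp_red: "hred\<^sup>*\<^sup>* (bcomp Q1 Q2) (Abs (App (lift Q1 0) (App (lift Q2 0) (Var 0))))"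
proof -
  have s1: "hred (App lamB Q1) (Abs (Abs (App (lift (lift Q1 0) 0) (App (Var 1) (Var 0)))))"
    using hred.beta[of "Abs (Abs (App (Var 2) (App (Var 1) (Var 0))))" Q1] by (simp add: lamB_def)
  have s2: "hred (bcomp Q1 Q2) (App (Abs (Abs (App (lift (lift Q1 0) 0) (App (Var 1) (Var 0))))) Q2)"
    unfolding bcomp_def by (rule hred.appL[OF s1]) simp
  have ll: "lift (lift Q1 0) 0 = lift (lift Q1 0) 1" using lift_lift[of 0 0 Q1] by simp
  have s3: "hred (App (Abs (Abs (App (lift (lift Q1 0) 0) (App (Var 1) (Var 0))))) Q2)
      (Abs (App (lift Q1 0) (App (lift Q2 0) (Var 0))))"
    using hred.beta[of "Abs (App (lift (lift Q1 0) 0) (App (Var 1) (Var 0)))" Q2] unfolding ll by simp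
  show ?thesis using s2 s3 by (blast intro: rtranclp.rtrancl_into_rtrancl r_into_rtranclp)
qed

lemma EXs_Var0: "EXs (FN []) 0 (Var 0)"
  by simp

lemma main_i:
  assumes "Q1 \<in> E_omega" "Q2 \<in> E_omega"
  shows "bcomp Q1 Q2 \<in> E_omega \<and> ((Q1 \<in> E_inf \<or> Q2 \<in> E_inf) \<longrightarrow> bcomp Q1 Q2 \<in> E_inf)"
proof -
  obtain t1 where r1: "hred\<^sup>*\<^sup>* Q1 (Abs t1)" and E1: "EE 0 t1"
    and f1: "bt_finite (BT Q1) \<longleftrightarrow> bt_finite (BT t1)" using Eomega_D[OF assms(1)] by blast
  obtain t2 where r2: "hred\<^sup>*\<^sup>* Q2 (Abs t2)" and E2: "EE 0 t2"
    and f2: "bt_finite (BT Q2) \<longleftrightarrow> bt_finite (BT t2)" using Eomega_D[OF assms(2)] by blast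
  define X where "X = App (lift Q2 0) (Var 0)"
  define R where "R = App (lift Q1 0) X"
  have rR: "hred\<^sup>*\<^sup>* (bcomp Q1 Q2) (Abs R)" using bcomp_red unfolding R_def X_def .
  have rl1: "hred\<^sup>*\<^sup>* (lift Q1 0) (Abs (lift t1 1))" using hreds_lift[OF r1, of 0] by simp
  have rl2: "hred\<^sup>*\<^sup>* (lift Q2 0) (Abs (lift t2 1))" using hreds_lift[OF r2, of 0] by simp
  have rX: "hred\<^sup>*\<^sup>* X (subst (lift t2 1) (Var 0) 0)" unfolding X_def by (rule app_abs[OF rl2])
  have rR2: "hred\<^sup>*\<^sup>* R (subst (lift t1 1) X 0)" unfolding R_def by (rule app_abs[OF rl1])
  have key: "EXs (fmerge S1 (fmerge S2 (FN []))) 0 R" if e1: "EXs S1 0 t1" and e2: "EXs S2 0 t2" for S1 S2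
  proof -
    have a1: "EXs S1 0 (lift t1 1)" using EXs_lift[OF e1, of 1] by simp
    have a2: "EXs S2 0 (lift t2 1)" using EXs_lift[OF e2, of 1] by simp
    have "EXs (fmerge S2 (FN [])) 0 (subst (lift t2 1) (Var 0) 0)" by (rule SUBST[OF a2 EXs_Var0])
    then have bX: "EXs (fmerge S2 (FN [])) 0 X" by (rule EXs_back[OF rX])
    have "EXs (fmerge S1 (fmerge S2 (FN []))) 0 (subst (lift t1 1) X 0)" by (rule SUBST[OF a1 bX])
    then show ?thesis by (rule EXs_back[OF rR2])
  qed
  have ER: "EE 0 R" unfolding EE_def
  proof
    fix n
    obtain S1 where "full n S1" "EXs S1 0 t1" using E1 unfolding EE_def by blast
    moreover obtain S2 where "full n S2" "EXs S2 0 t2" using E2 unfolding EE_def by blast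
    ultimately show "\<exists>S. full n S \<and> EXs S 0 R"
      using key full_fmerge full_FN_nil by blast
  qed
  have I: "bcomp Q1 Q2 \<in> E_omega" and fR: "bt_finite (BT (bcomp Q1 Q2)) \<longleftrightarrow> bt_finite (BT R)"
    using Eomega_I[OF rR ER] by auto
  have "bcomp Q1 Q2 \<in> E_inf" if inf: "Q1 \<in> E_inf \<or> Q2 \<in> E_inf"
  proof -
    have "\<not> bt_finite (BT R)"
    proof (rule shape_inf)
      fix d
      from inf show "\<exists>S. hasdepth d S \<and> EXs S 0 R"
      proof
        assume "Q1 \<in> E_inf"
        then have "\<not> bt_finite (BT t1)" using f1 by (simp add: E_inf_def)
        then obtain S1 where s1: "full d S1" "hasdepth d S1" "EXs S1 0 t1" using inf_shape[OF E1] by blast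
        obtain S2 where s2: "full d S2" "EXs S2 0 t2" using E2 unfolding EE_def by blast
        have "full d (fmerge S2 (FN []))" using s2 full_fmerge full_FN_nil by blast
        then have "hasdepth d (fmerge S1 (fmerge S2 (FN [])))" using s1 depth_fmerge by blast
        then show ?thesis using key[OF s1(3) s2(2)] by blast
      next
        assume "Q2 \<in> E_inf"
        then have "\<not> bt_finite (BT t2)" using f2 by (simp add: E_inf_def)
        then obtain S2 where s2: "full d S2" "hasdepth d S2" "EXs S2 0 t2" using inf_shape[OF E2] by blast
        obtain S1 where s1: "full d S1" "EXs S1 0 t1" using E1 unfolding EE_def by blast
        have "hasdepth d (fmerge S2 (FN []))" using s2 full_FN_nil depth_fmerge by blast
        then have "hasdepth d (fmerge S1 (fmerge S2 (FN [])))" using s1 depth_fmerge by blast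
        then show ?thesis using key[OF s1(2) s2(3)] by blast
      qed
    qed
    then show ?thesis using I fR by (simp add: E_inf_def)
  qed
  then show ?thesis using I by blast
qed

lemma lift_lamI[simp]: "lift lamI k = lamI"
  by (simp add: lamI_def)

lemma liftn_lamI[simp]: "liftn n lamI = lamI"
  by (induct n) simp_all

lemma APPLY':
  assumes P: "EXs T (y + m) P" and lV: "length Vs = m" and lS: "length Ss = m"
  and V: "\<forall>i<m. EXs (Ss ! i) (m - 1 - i) (Vs ! i)"
  shows "EXs (fmerge (FN Ss) T) y (absn m (apps P Vs))"
proof (cases T)
  case FL
  then show ?thesis by simp
next
  case (FN Ts)
  have "EXs (fmerge (FN Ss) (FN Ts)) y (absn m (apps P Vs))"
    by (rule APPLY[OF SUBST]) (use P FN lV lS V in simp_all)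
  then show ?thesis unfolding FN .
qed

lemma main_ii:
  assumes "Q \<in> E_inf"
  shows "App Q lamI \<in> E_inf"
proof -
  have QO: "Q \<in> E_omega" and nfQ: "\<not> bt_finite (BT Q)" using assms by (auto simp: E_inf_def)
  obtain t where r: "hred\<^sup>*\<^sup>* Q (Abs t)" and E: "EE 0 t"
    and f: "bt_finite (BT Q) \<longleftrightarrow> bt_finite (BT t)" using Eomega_D[OF QO] by blast
  have nf: "\<not> bt_finite (BT t)" using nfQ f by simp
  from E obtain S0 where "full 1 S0" "EXs S0 0 t" unfolding EE_def by blast
  then obtain Ss0 where "EXs (FN Ss0) 0 t" by (cases S0) auto
  then obtain Ms where hM0: "hred\<^sup>*\<^sup>* t (absn (length Ss0) (apps (Var (0 + length Ss0)) Ms))"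
    and lM0: "length Ms = length Ss0" by auto
  define m where "m = length Ss0"
  have hM: "hred\<^sup>*\<^sup>* t (absn m (apps (Var (0 + m)) Ms))" using hM0 by (simp add: m_def)
  have lM: "length Ms = m" using lM0 by (simp add: m_def)
  obtain S1 where s1: "full 1 S1" "hasdepth 1 S1" "EXs S1 0 t" using inf_shape[OF E nf] by blast
  then obtain Ss1 where S1: "S1 = FN Ss1" by (cases S1) auto
  have "length Ss1 = m" using EXs_FN_det[OF hM] s1(3) S1 by simp
  moreover have "Ss1 \<noteq> []" using s1(2) S1 by auto
  ultimately obtain m' where mS: "m = Suc m'" by (cases m) auto
  obtain M0 Mt where Ms: "Ms = M0 # Mt" using lM mS by (cases Ms) auto
  define g where "g = (\<lambda>u. subst u lamI m)"
  define t' where "t' = absn m' (apps (g M0) (map g Mt))"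
  have "hred\<^sup>*\<^sup>* (App Q lamI) (subst t lamI 0)" by (rule app_abs[OF r])
  also have "hred\<^sup>*\<^sup>* (subst t lamI 0) (subst (absn m (apps (Var (0 + m)) Ms)) lamI 0)"
    by (rule hreds_subst[OF hM])
  also have "subst (absn m (apps (Var (0 + m)) Ms)) lamI 0 = absn m (apps lamI (map g Ms))"
    by (simp add: subst_absn subst_apps g_def)
  also have "hred\<^sup>*\<^sup>* (absn m (apps lamI (map g Ms))) (absn m (apps (g M0) (map g Mt)))"
  proof (rule hreds_absn, rule r_into_rtranclp)
    have "hred (App lamI (g M0)) (g M0)" using hred.beta[of "Var 0" "g M0"] by (simp add: lamI_def)
    then have "hred (apps (App lamI (g M0)) (map g Mt)) (apps (g M0) (map g Mt))"
      by (rule hred_apps) simp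
    then show "hred (apps lamI (map g Ms)) (apps (g M0) (map g Mt))" using Ms by simp
  qed
  also have "absn m (apps (g M0) (map g Mt)) = Abs t'" by (simp add: mS t'_def)
  finally have rQ: "hred\<^sup>*\<^sup>* (App Q lamI) (Abs t')" .
  have key: "EXs (fmerge (FN (tl Ss)) (Ss ! 0)) 0 t'" if e: "EXs (FN Ss) 0 t" for Ss
  proof -
    have d: "length Ss = m \<and> (\<forall>i<m. EXs (Ss ! i) (m - 1 - i) (Ms ! i))"
      by (rule EXs_FN_det[OF hM e])
    have sub: "EXs (Ss ! i) (m - 1 - i) (g (Ms ! i))" if i: "i < m" for i
    proof -
      have ne: "m - 1 - i \<noteq> m" using i by simp
      have "EXs (Ss ! i) (if m - 1 - i < m then m - 1 - i else m - 1 - i - 1) (subst (Ms ! i) lamI m)"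
        using EXs_subst[OF _ ne] d i by blast
      moreover have "m - 1 - i < m" using i by arith
      ultimately show ?thesis by (simp only: if_True g_def)
    qed
    have P: "EXs (Ss ! 0) (0 + m') (g M0)" using sub[of 0] mS Ms by simp
    have V: "\<forall>i<m'. EXs (tl Ss ! i) (m' - 1 - i) (map g Mt ! i)"
    proof (intro allI impI)
      fix i assume i: "i < m'"
      have "EXs (Ss ! Suc i) (m - 1 - Suc i) (g (Ms ! Suc i))" using sub[of "Suc i"] i mS by simp
      then show "EXs (tl Ss ! i) (m' - 1 - i) (map g Mt ! i)"
        using i mS Ms lM d by (simp add: nth_tl)
    qed
    have "EXs (fmerge (FN (tl Ss)) (Ss ! 0)) 0 (absn m' (apps (g M0) (map g Mt)))"
      by (rule APPLY'[OF P]) (use lM Ms mS d V in simp_all)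
    then show ?thesis by (simp add: t'_def)
  qed
  have full_tl: "full n (FN (tl Ss))" if "full (Suc n) (FN Ss)" for n Ss
  proof -
    have "full (Suc n) (FN (tl Ss))" using that by (cases Ss) auto
    then show ?thesis by (rule full_mono)
  qed
  have E': "EE 0 t'" unfolding EE_def
  proof
    fix n
    obtain S where fS: "full (Suc n) S" and eS: "EXs S 0 t" using E unfolding EE_def by blast
    then obtain Ss where S: "S = FN Ss" by (cases S) auto
    have lS: "length Ss = m" using EXs_FN_det[OF hM] eS S by simp
    have "full n (Ss ! 0)" using fS S lS mS by simp
    moreover have "full n (FN (tl Ss))" using full_tl fS S by blast
    ultimately have "full n (fmerge (FN (tl Ss)) (Ss ! 0))" using full_fmerge by blast
    then show "\<exists>S. full n S \<and> EXs S 0 t'" using key eS S by blast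
  qed
  have I: "App Q lamI \<in> E_omega" and fI: "bt_finite (BT (App Q lamI)) \<longleftrightarrow> bt_finite (BT t')"
    using Eomega_I[OF rQ E'] by auto
  have "\<not> bt_finite (BT t')"
  proof (rule shape_inf)
    fix d
    obtain S where fS: "full (Suc d) S" and hS: "hasdepth (Suc d) S" and eS: "EXs S 0 t"
      using inf_shape[OF E nf] by blast
    then obtain Ss where S: "S = FN Ss" by (cases S) auto
    have lS: "length Ss = m" using EXs_FN_det[OF hM] eS S by simp
    from hS S obtain i where i: "i < length Ss" "hasdepth d (Ss ! i)" by (auto simp: in_set_conv_nth)
    have "hasdepth d (fmerge (FN (tl Ss)) (Ss ! 0))"
    proof (cases i)
      case 0
      have "full d (FN (tl Ss))" using full_tl fS S by blast
      then show ?thesis using i 0 depth_fmerge by blast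
    next
      case (Suc j)
      have "Ss ! i \<in> set (tl Ss)" using i Suc by (cases Ss) auto
      then have "hasdepth (Suc d) (FN (tl Ss))" using i by auto
      then have "hasdepth d (FN (tl Ss))" by (rule hasdepth_mono)
      moreover have "full d (Ss ! 0)" using fS S lS mS by simp
      ultimately show ?thesis using depth_fmerge by blast
    qed
    then show "\<exists>S. hasdepth d S \<and> EXs S 0 t'" using key eS S by blast
  qed
  then show ?thesis using I fI by (simp add: E_inf_def)
qed

theorem mainTheorem6:
  shows "(\<forall>Q1 Q2. Q1 \<in> E_omega \<and> Q2 \<in> E_omega \<longrightarrow>
            bcomp Q1 Q2 \<in> E_omega \<and>
            ((Q1 \<in> E_inf \<or> Q2 \<in> E_inf) \<longrightarrow> bcomp Q1 Q2 \<in> E_inf))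
       \<and> (\<forall>Q. Q \<in> E_inf \<longrightarrow> App Q lamI \<in> E_inf)"
  using main_i main_ii by blast

end
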